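(* Let $\mathscr{H}$ be a complex Hilbert space and let $T$ be a Hilbert–Schmidt operator on $\mathscr{H}$. Then $$w_2^2(T)\leq\frac12\|T\|_2^2+\frac12|\mathrm{tr}(T^2)|.$$
   Context: An operator $T$ on $\mathscr{H}$ is Hilbert–Schmidt if $\sum_i\|Te_i\|^2<\infty$ for some (equivalently every) orthonormal basis $\{e_i\}$; its Hilbert–Schmidt norm is $\|T\|_2=(\mathrm{tr}(T^*T))^{1/2}$. $\Re(T)=\frac12(T+T^* )$ and $w_2(T)=\sup_{\theta\in\mathbb{R}}\|\Re(e^{i\theta}T)\|_2$. *)

theory Defs
  imports "HOL-Analysis.Analysis"
begin

class complex_vector = real_vector +
  fixes scaleC :: "complex \<Rightarrow> 'a \<Rightarrow> 'a"
  assumes scaleC_add_right: "scaleC a (x + y) = scaleC a x + scaleC a y"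
    and scaleC_add_left: "scaleC (a + b) x = scaleC a x + scaleC b x"
    and scaleC_scaleC: "scaleC a (scaleC b x) = scaleC (a * b) x"
    and scaleC_one: "scaleC 1 x = x"
    and scaleR_scaleC: "scaleR r x = scaleC (complex_of_real r) x"

text \<open>Inner product: conjugate-linear in the first, linear in the second argument.\<close>
class complex_inner = complex_vector + real_normed_vector +
  fixes cinner :: "'a \<Rightarrow> 'a \<Rightarrow> complex"
  assumes cinner_conj_commute: "cinner x y = cnj (cinner y x)"
    and cinner_add_right: "cinner x (y + z) = cinner x y + cinner x z"
    and cinner_scaleC_right: "cinner x (scaleC a y) = a * cinner x y"
    and cinner_ge_zero: "0 \<le> Re (cinner x x)"
    and cinner_eq_zero_iff: "cinner x x = 0 \<longleftrightarrow> x = 0"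
    and norm_eq_sqrt_cinner: "norm x = sqrt (Re (cinner x x))"

text \<open>A complex Hilbert space is a type of class \<open>{complex_inner, complete_space}\<close>.\<close>

definition clinear :: "('a::complex_vector \<Rightarrow> 'b::complex_vector) \<Rightarrow> bool" where
  "clinear T \<longleftrightarrow> (\<forall>x y. T (x + y) = T x + T y) \<and> (\<forall>c x. T (scaleC c x) = scaleC c (T x))"

definition bounded_clinear :: "('a::complex_inner \<Rightarrow> 'b::complex_inner) \<Rightarrow> bool" where
  "bounded_clinear T \<longleftrightarrow> clinear T \<and> (\<exists>K. \<forall>x. norm (T x) \<le> K * norm x)"

definition cspan :: "'a::complex_vector set \<Rightarrow> 'a set" where
  "cspan E = {\<Sum>e\<in>F. scaleC (c e) e | F c. finite F \<and> F \<subseteq> E}"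

definition corthonormal :: "'a::complex_inner set \<Rightarrow> bool" where
  "corthonormal E \<longleftrightarrow> (\<forall>e\<in>E. cinner e e = 1) \<and> (\<forall>e\<in>E. \<forall>f\<in>E. e \<noteq> f \<longrightarrow> cinner e f = 0)"

definition is_onb :: "'a::complex_inner set \<Rightarrow> bool" where
  "is_onb E \<longleftrightarrow> corthonormal E \<and> closure (cspan E) = UNIV"

definition adj :: "('a::complex_inner \<Rightarrow> 'a) \<Rightarrow> 'a \<Rightarrow> 'a" where
  "adj T y = (THE z. \<forall>x. cinner (T x) y = cinner x z)"

text \<open>Trace \<open>\<Sum>_i <e_i, A e_i>\<close> with respect to an orthonormal basis (basis-independent for trace class A).\<close>
definition trace :: "('a::complex_inner \<Rightarrow> 'a) \<Rightarrow> complex" where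
  "trace A = infsum (\<lambda>e. cinner e (A e)) (SOME E. is_onb E)"

definition hilbert_schmidt :: "('a::complex_inner \<Rightarrow> 'a) \<Rightarrow> bool" where
  "hilbert_schmidt T \<longleftrightarrow> (\<exists>E. is_onb E \<and> (\<lambda>e. (norm (T e))\<^sup>2) summable_on E)"

definition hs_norm :: "('a::complex_inner \<Rightarrow> 'a) \<Rightarrow> real" where
  "hs_norm T = sqrt (Re (trace (adj T \<circ> T)))"

definition real_part_op :: "('a::complex_inner \<Rightarrow> 'a) \<Rightarrow> 'a \<Rightarrow> 'a" where
  "real_part_op T = (\<lambda>x. scaleC (1/2) (T x + adj T x))"

definition w2 :: "('a::complex_inner \<Rightarrow> 'a) \<Rightarrow> real" where
  "w2 T = (SUP \<theta>::real. hs_norm (real_part_op (\<lambda>x. scaleC (cis \<theta>) (T x))))"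

end

theory Submission
  imports Defs
begin


lemma cinner_add_left: "cinner (x + y) z = cinner x z + cinner y z"
  by (metis cinner_conj_commute cinner_add_right complex_cnj_add)

lemma cinner_scaleC_left: "cinner (scaleC a x) y = cnj a * cinner x y"
  by (metis cinner_conj_commute cinner_scaleC_right complex_cnj_mult)

lemma cinner_zero_right[simp]: "cinner x 0 = 0"
  using cinner_add_right[of x 0 0] by simp

lemma cinner_zero_left[simp]: "cinner 0 x = 0"
  using cinner_add_left[of 0 0 x] by simp

lemma cinner_minus_right: "cinner x (- y) = - cinner x y"
proof -
  have "cinner x y + cinner x (- y) = 0" using cinner_add_right[of x y "-y"] by simp
  then show ?thesis by (rule add_eq_0_iff[THEN iffD1])
qed

lemma cinner_minus_left: "cinner (- x) y = - cinner x y"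
proof -
  have "cinner x y + cinner (- x) y = 0" using cinner_add_left[of x "-x" y] by simp
  then show ?thesis by (rule add_eq_0_iff[THEN iffD1])
qed

lemma cinner_diff_right: "cinner x (y - z) = cinner x y - cinner x z"
  by (simp only: diff_conv_add_uminus cinner_add_right cinner_minus_right)

lemma cinner_diff_left: "cinner (x - y) z = cinner x z - cinner y z"
  by (simp only: diff_conv_add_uminus cinner_add_left cinner_minus_left)

lemma cinner_sum_right: "cinner x (\<Sum>i\<in>F. f i) = (\<Sum>i\<in>F. cinner x (f i))"
  by (induction F rule: infinite_finite_induct) (auto simp: cinner_add_right)

lemma cinner_sum_left: "cinner (\<Sum>i\<in>F. f i) x = (\<Sum>i\<in>F. cinner (f i) x)"
  by (induction F rule: infinite_finite_induct) (auto simp: cinner_add_left)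

lemma cinner_scaleR_right: "cinner x (scaleR r y) = of_real r * cinner x y"
  by (simp add: scaleR_scaleC cinner_scaleC_right)

lemma cinner_scaleR_left: "cinner (scaleR r x) y = of_real r * cinner x y"
  by (simp add: scaleR_scaleC cinner_scaleC_left)

lemma cinner_self_real: "cinner x x = of_real ((norm x)\<^sup>2)"
proof -
  have "Im (cinner x x) = 0"
  proof -
    have "Im (cinner x x) = - Im (cinner x x)"
      using arg_cong[OF cinner_conj_commute[of x x], of Im] by simp
    then show ?thesis by linarith
  qed
  moreover have "Re (cinner x x) = (norm x)\<^sup>2"
    using cinner_ge_zero[of x] by (simp add: norm_eq_sqrt_cinner)
  ultimately show ?thesis by (simp add: complex_eq_iff)
qed

lemma scaleC_zero_right[simp]: "scaleC a (0::'a::complex_vector) = 0"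
  using scaleC_add_right[of a 0 0] by simp

lemma scaleC_zero_left[simp]: "scaleC 0 (x::'a::complex_vector) = 0"
  using scaleC_add_left[of 0 0 x] by simp

lemma scaleC_minus_right: "scaleC a (- (x::'a::complex_vector)) = - scaleC a x"
proof -
  have "scaleC a x + scaleC a (- x) = 0" using scaleC_add_right[of a x "-x"] by simp
  then show ?thesis by (rule add_eq_0_iff[THEN iffD1])
qed

lemma scaleC_diff_right: "scaleC a ((x::'a::complex_vector) - y) = scaleC a x - scaleC a y"
  by (simp only: diff_conv_add_uminus scaleC_add_right scaleC_minus_right)

lemma scaleC_sum_right: "scaleC a (\<Sum>i\<in>F. f i) = (\<Sum>i\<in>F. scaleC a (f i :: 'a::complex_vector))"
  by (induction F rule: infinite_finite_induct) (auto simp: scaleC_add_right)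

lemma norm_scaleC: "norm (scaleC c (x::'a::complex_inner)) = cmod c * norm x"
proof -
  have "(norm (scaleC c x))\<^sup>2 = Re (cinner (scaleC c x) (scaleC c x))"
    using cinner_self_real by (metis Re_complex_of_real)
  also have "\<dots> = (cmod c)\<^sup>2 * (norm x)\<^sup>2"
  proof -
    have "cinner (scaleC c x) (scaleC c x) = (cnj c * c) * cinner x x"
      by (simp add: cinner_scaleC_left cinner_scaleC_right)
    also have "cnj c * c = of_real ((cmod c)\<^sup>2)"
      by (metis complex_norm_square mult.commute)
    finally show ?thesis by (simp add: cinner_self_real)
  qed
  finally have "(norm (scaleC c x))\<^sup>2 = (cmod c * norm x)\<^sup>2" by (simp add: power_mult_distrib)
  then show ?thesis by (simp add: power2_eq_iff_nonneg)
qed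

lemma cinner_eq_zero_imp: "cinner x x = 0 \<Longrightarrow> x = 0"
  using cinner_eq_zero_iff by blast

lemma cinner_ext: assumes "\<And>x. cinner x z1 = cinner x z2" shows "z1 = z2"
proof -
  have "cinner (z1 - z2) (z1 - z2) = 0"
    using assms by (simp add: cinner_diff_right)
  then have "z1 - z2 = 0" using cinner_eq_zero_iff by blast
  then show ?thesis by simp
qed

lemma Re_cinner_le: "Re (cinner x y) \<le> ((norm x)\<^sup>2 + (norm y)\<^sup>2) / 2"
proof -
  have 0: "0 \<le> Re (cinner (x - y) (x - y))" by (rule cinner_ge_zero)
  have 1: "cinner (x - y) (x - y) = cinner x x + cinner y y - (cinner x y + cinner y x)"
    by (simp add: cinner_diff_left cinner_diff_right)
  have 2: "cinner x y + cinner y x = of_real (2 * Re (cinner x y))"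
    by (metis cinner_conj_commute complex_add_cnj add.commute)
  have "Re (cinner (x - y) (x - y)) = (norm x)\<^sup>2 + (norm y)\<^sup>2 - 2 * Re (cinner x y)"
    unfolding 1 2 by (simp add: cinner_self_real)
  with 0 have "0 \<le> (norm x)\<^sup>2 + (norm y)\<^sup>2 - 2 * Re (cinner x y)" by (rule ord_le_eq_trans)
  moreover have "\<And>a b c::real. 0 \<le> a + b - 2*c \<Longrightarrow> c \<le> (a+b)/2" by (simp add: field_simps)
  ultimately show ?thesis by blast
qed

lemma cmod_cinner_le_amgm: "cmod (cinner x y) \<le> ((norm x)\<^sup>2 + (norm y)\<^sup>2) / 2"
proof (cases "cinner x y = 0")
  case True then show ?thesis by simp
next
  case False
  define u where "u = cnj (cinner x y) / cmod (cinner x y)"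
  have u1: "cmod u = 1" using False by (simp add: u_def norm_divide)
  have "cinner x (scaleC u y) = u * cinner x y" by (simp add: cinner_scaleC_right)
  also have "\<dots> = of_real (cmod (cinner x y))"
  proof -
    have "u * cinner x y = (cnj (cinner x y) * cinner x y) / cmod (cinner x y)" by (simp add: u_def)
    also have "cnj (cinner x y) * cinner x y = of_real ((cmod (cinner x y))\<^sup>2)"
      by (metis complex_norm_square mult.commute)
    finally show ?thesis using False by (simp add: power2_eq_square)
  qed
  finally have "cmod (cinner x y) = Re (cinner x (scaleC u y))" by simp
  also have "\<dots> \<le> ((norm x)\<^sup>2 + (norm (scaleC u y))\<^sup>2) / 2" by (rule Re_cinner_le)
  finally show ?thesis by (simp add: norm_scaleC u1)
qed

lemma cauchy_schwarz: "cmod (cinner x y) \<le> norm x * norm y"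
proof (cases "x = 0 \<or> y = 0")
  case True then show ?thesis by auto
next
  case False
  then have nx: "norm x > 0" and ny: "norm y > 0" by auto
  have "cinner x y = of_real (norm x * norm y) * cinner (scaleC (1 / of_real (norm x)) x) (scaleC (1 / of_real (norm y)) y)"
    using nx ny by (simp add: cinner_scaleC_left cinner_scaleC_right)
  then have "cmod (cinner x y) = norm x * norm y * cmod (cinner (scaleC (1 / of_real (norm x)) x) (scaleC (1 / of_real (norm y)) y))"
    using nx ny by (simp add: norm_mult)
  also have "\<dots> \<le> norm x * norm y * 1"
  proof (rule mult_left_mono)
    show "cmod (cinner (scaleC (1 / of_real (norm x)) x) (scaleC (1 / of_real (norm y)) y)) \<le> 1"
      using cmod_cinner_le_amgm[of "scaleC (1 / of_real (norm x)) x" "scaleC (1 / of_real (norm y)) y"]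
      using nx ny by (simp add: norm_scaleC norm_divide)
  qed (use nx ny in auto)
  finally show ?thesis by simp
qed

lemma bounded_linear_cinner_right: "bounded_linear (\<lambda>y. cinner x y)"
  apply (rule bounded_linear_intro[where K="norm x"])
    apply (simp add: cinner_add_right)
   apply (simp add: cinner_scaleR_right scaleR_conv_of_real)
  by (metis cauchy_schwarz mult.commute)

lemma bounded_linear_cinner_left: "bounded_linear (\<lambda>y. cinner y x)"
  apply (rule bounded_linear_intro[where K="norm x"])
    apply (simp add: cinner_add_left)
   apply (simp add: cinner_scaleR_left scaleR_conv_of_real)
  by (metis cauchy_schwarz mult.commute)

lemma bounded_clinear_bounded_linear:
  assumes "bounded_clinear T" shows "bounded_linear T"
proof -
  from assms obtain K where K: "\<And>x. norm (T x) \<le> K * norm x" and lin: "clinear T"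
    unfolding bounded_clinear_def by blast
  show ?thesis
    apply (rule bounded_linear_intro[where K=K])
    using lin K by (auto simp: clinear_def scaleR_scaleC mult.commute)
qed



lemma cnj_mult_self: "cnj z * z = of_real ((cmod z)\<^sup>2)"
  by (metis complex_norm_square mult.commute)

lemma mult_cnj_self: "z * cnj z = of_real ((cmod z)\<^sup>2)"
  by (metis complex_norm_square)

lemma onb_inner: "corthonormal E \<Longrightarrow> e \<in> E \<Longrightarrow> f \<in> E \<Longrightarrow> cinner e f = (if e = f then 1 else 0)"
  unfolding corthonormal_def by auto

lemma cinner_finite_comb:
  assumes "corthonormal E" "finite F" "F \<subseteq> E" "f \<in> E"
  shows "cinner f (\<Sum>e\<in>F. scaleC (c e) e) = (if f \<in> F then c f else 0)"
proof -
  have "cinner f (\<Sum>e\<in>F. scaleC (c e) e) = (\<Sum>e\<in>F. c e * cinner f e)"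
    by (simp add: cinner_sum_right cinner_scaleC_right)
  also have "\<dots> = (\<Sum>e\<in>F. if f = e then c e else 0)"
    by (rule sum.cong) (use assms in \<open>auto simp: onb_inner\<close>)
  also have "\<dots> = (if f \<in> F then c f else 0)"
    using assms(2) by simp
  finally show ?thesis .
qed

lemma cinner_self_finite_comb:
  assumes "corthonormal E" "finite F" "F \<subseteq> E"
  shows "cinner (\<Sum>e\<in>F. scaleC (c e) e) (\<Sum>e\<in>F. scaleC (c e) e) = of_real (\<Sum>e\<in>F. (cmod (c e))\<^sup>2)"
proof -
  have "cinner (\<Sum>e\<in>F. scaleC (c e) e) (\<Sum>e\<in>F. scaleC (c e) e)
      = (\<Sum>f\<in>F. cnj (c f) * cinner f (\<Sum>e\<in>F. scaleC (c e) e))"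
    by (simp add: cinner_sum_left cinner_scaleC_left)
  also have "\<dots> = (\<Sum>f\<in>F. cnj (c f) * c f)"
  proof (rule sum.cong[OF refl])
    fix f assume f: "f \<in> F"
    then have "f \<in> E" using assms by auto
    then show "cnj (c f) * cinner f (\<Sum>e\<in>F. scaleC (c e) e) = cnj (c f) * c f"
      by (simp add: cinner_finite_comb[OF assms] f)
  qed
  also have "\<dots> = (\<Sum>f\<in>F. of_real ((cmod (c f))\<^sup>2))"
    by (simp only: cnj_mult_self)
  finally show ?thesis by simp
qed

lemma norm_finite_comb:
  assumes "corthonormal E" "finite F" "F \<subseteq> E"
  shows "(norm (\<Sum>e\<in>F. scaleC (c e) e))\<^sup>2 = (\<Sum>e\<in>F. (cmod (c e))\<^sup>2)"
  using cinner_self_finite_comb[OF assms, of c] cinner_self_real[of "\<Sum>e\<in>F. scaleC (c e) e"]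
  by (metis of_real_eq_iff)

lemma bessel_finite:
  assumes "corthonormal E" "finite F" "F \<subseteq> E"
  shows "(\<Sum>e\<in>F. (cmod (cinner e x))\<^sup>2) \<le> (norm x)\<^sup>2"
proof -
  define p where "p = (\<Sum>e\<in>F. scaleC (cinner e x) e)"
  define s where "s = (\<Sum>e\<in>F. (cmod (cinner e x))\<^sup>2)"
  have pp: "cinner p p = of_real s"
    unfolding p_def s_def by (rule cinner_self_finite_comb[OF assms])
  have "cinner p x = (\<Sum>e\<in>F. cnj (cinner e x) * cinner e x)"
    unfolding p_def by (simp add: cinner_sum_left cinner_scaleC_left)
  also have "\<dots> = (\<Sum>e\<in>F. of_real ((cmod (cinner e x))\<^sup>2))"
    by (simp only: cnj_mult_self)
  finally have px: "cinner p x = of_real s" by (simp add: s_def)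
  have xp: "cinner x p = of_real s"
    using px by (metis cinner_conj_commute complex_cnj_complex_of_real)
  have "cinner (x - p) (x - p) = cinner x x - cinner x p - (cinner p x - cinner p p)"
    by (simp add: cinner_diff_left cinner_diff_right)
  also have "\<dots> = of_real ((norm x)\<^sup>2 - s)"
    unfolding pp px xp by (simp add: cinner_self_real)
  finally have "Re (cinner (x - p) (x - p)) = (norm x)\<^sup>2 - s" by simp
  with cinner_ge_zero[of "x - p"] show ?thesis unfolding s_def by linarith
qed

lemma bessel_summable:
  assumes "corthonormal E"
  shows "(\<lambda>e. (cmod (cinner e x))\<^sup>2) summable_on E"
    and "infsum (\<lambda>e. (cmod (cinner e x))\<^sup>2) E \<le> (norm x)\<^sup>2"
proof -
  show s: "(\<lambda>e. (cmod (cinner e x))\<^sup>2) summable_on E"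
    apply (rule nonneg_bdd_above_summable_on)
     apply simp
    apply (rule bdd_aboveI[where M="(norm x)\<^sup>2"])
    using bessel_finite[OF assms] by auto
  show "infsum (\<lambda>e. (cmod (cinner e x))\<^sup>2) E \<le> (norm x)\<^sup>2"
    by (rule infsum_le_finite_sums[OF s]) (use bessel_finite[OF assms] in auto)
qed

lemma summable_on_crit:
  fixes f :: "'b \<Rightarrow> 'a::{real_normed_vector, complete_space}"
  assumes g: "g summable_on A" and gnn: "\<And>x. x \<in> A \<Longrightarrow> g x \<ge> (0::real)"
    and bound: "\<And>F. finite F \<Longrightarrow> F \<subseteq> A \<Longrightarrow> (norm (sum f F))\<^sup>2 \<le> sum g F"
  shows "f summable_on A"
proof -
  define L where "L = infsum g A"
  have gL: "(g has_sum L) A" using g by (simp add: L_def)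
  have le: "sum g F \<le> L" if "finite F" "F \<subseteq> A" for F
    using finite_sum_le_has_sum[OF gL that] gnn by auto
  have "\<exists>P. eventually P (finite_subsets_at_top A) \<and>
              (\<forall>F F'. P F \<and> P F' \<longrightarrow> dist (sum f F) (sum f F') < e)" if "e > 0" for e
  proof -
    define d where "d = (e/2)\<^sup>2"
    have d: "d > 0" using that by (simp add: d_def)
    define P where "P F \<longleftrightarrow> finite F \<and> F \<subseteq> A \<and> L - sum g F < d" for F
    have "\<forall>\<^sub>F F in finite_subsets_at_top A. dist (sum g F) L < d"
      using gL d unfolding has_sum_def by (rule tendstoD)
    moreover have "\<forall>\<^sub>F F in finite_subsets_at_top A. finite F \<and> F \<subseteq> A"
      by auto
    ultimately have evP: "eventually P (finite_subsets_at_top A)"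
      by eventually_elim (auto simp: P_def dist_real_def)
    have sub: "dist (sum f G) (sum f F) < e/2" if "P F" "finite G" "F \<subseteq> G" "G \<subseteq> A" for F G
    proof -
      have fin: "finite F" "F \<subseteq> A" "L - sum g F < d" using that(1) by (auto simp: P_def)
      have "dist (sum f G) (sum f F) = norm (sum f (G - F))"
        unfolding dist_norm using that by (subst sum_diff) auto
      moreover have "(norm (sum f (G - F)))\<^sup>2 \<le> sum g (G - F)"
        using that by (intro bound) auto
      moreover have "sum g (G - F) = sum g G - sum g F"
        using that by (subst sum_diff) auto
      moreover have "sum g G \<le> L" using le that by auto
      ultimately have "(norm (sum f (G - F)))\<^sup>2 < d" using fin by linarith
      moreover have "sum f G - sum f F = sum f (G - F)"
        using that by (subst sum_diff) auto
      ultimately have "(dist (sum f G) (sum f F))\<^sup>2 < d"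
        unfolding dist_norm by simp
      then have "(dist (sum f G) (sum f F))\<^sup>2 < (e/2)\<^sup>2" by (simp add: d_def)
      then show ?thesis
        by (rule power_less_imp_less_base) (use \<open>e > 0\<close> in simp)
    qed
    have "dist (sum f F1) (sum f F2) < e" if "P F1" "P F2" for F1 F2
    proof -
      have f1: "finite F1" "F1 \<subseteq> A" "finite F2" "F2 \<subseteq> A" using that by (auto simp: P_def)
      have "dist (sum f F1) (sum f F2) \<le> dist (sum f (F1 \<union> F2)) (sum f F1) + dist (sum f (F1 \<union> F2)) (sum f F2)"
        by (rule dist_triangle3)
      also have "\<dots> < e/2 + e/2"
        by (intro add_strict_mono sub) (use that f1 in auto)
      finally show ?thesis by simp
    qed
    with evP show ?thesis by blast
  qed
  then have "cauchy_filter (filtermap (sum f) (finite_subsets_at_top A))"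
    by (simp add: cauchy_filter_metric_filtermap)
  moreover have "complete (UNIV::'a set)"
    by (meson Cauchy_convergent UNIV_I complete_def convergent_def)
  ultimately obtain L' where "(sum f \<longlongrightarrow> L') (finite_subsets_at_top A)"
    using complete_uniform[where S=UNIV] by (force simp add: filterlim_def)
  then show ?thesis
    using summable_on_def has_sum_def by blast
qed

lemma has_sum_single_point:
  assumes "f \<in> E"
  shows "((\<lambda>e. if e = f then a else 0) has_sum a) E"
proof -
  have "((\<lambda>e. if e = f then a else 0) has_sum a) {f}"
    by (rule has_sum_finiteI) auto
  then show ?thesis
    by (subst has_sum_cong_neutral[where T="{f}" and g="\<lambda>e. if e = f then a else 0"]) (use assms in auto)
qed

lemma comb_summable:
  fixes c :: "'a::{complex_inner, complete_space} \<Rightarrow> complex"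
  assumes "corthonormal E" "(\<lambda>e. (cmod (c e))\<^sup>2) summable_on E"
  shows "(\<lambda>e. scaleC (c e) e) summable_on E"
  by (rule summable_on_crit[OF assms(2)]) (auto simp: norm_finite_comb[OF assms(1)])

lemma onb_expansion:
  fixes x :: "'a::{complex_inner, complete_space}"
  assumes "is_onb E"
  shows "((\<lambda>e. scaleC (cinner e x) e) has_sum x) E"
proof -
  have on: "corthonormal E" using assms by (simp add: is_onb_def)
  have sm: "(\<lambda>e. scaleC (cinner e x) e) summable_on E"
    by (rule comb_summable[OF on bessel_summable(1)[OF on]])
  define y where "y = infsum (\<lambda>e. scaleC (cinner e x) e) E"
  have hy: "((\<lambda>e. scaleC (cinner e x) e) has_sum y) E" using sm by (simp add: y_def)
  have fy: "cinner f y = cinner f x" if f: "f \<in> E" for f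
  proof -
    have "((\<lambda>e. cinner f (scaleC (cinner e x) e)) has_sum cinner f y) E"
      by (rule has_sum_bounded_linear[OF bounded_linear_cinner_right hy])
    moreover have "((\<lambda>e. cinner f (scaleC (cinner e x) e)) has_sum cinner f x) E"
    proof -
      have "((\<lambda>e. if e = f then cinner f x else 0) has_sum cinner f x) E"
        by (rule has_sum_single_point[OF f])
      then show ?thesis
        by (rule has_sum_cong[THEN iffD1, rotated])
           (use on f in \<open>auto simp: cinner_scaleC_right onb_inner\<close>)
    qed
    ultimately show ?thesis by (rule has_sum_unique)
  qed
  define w where "w = x - y"
  have "cspan E \<subseteq> {z. cinner z w = 0}"
  proof
    fix z assume "z \<in> cspan E"
    then obtain F c where z: "z = (\<Sum>e\<in>F. scaleC (c e) e)" and F: "finite F" "F \<subseteq> E"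
      unfolding cspan_def by blast
    have "cinner z w = (\<Sum>e\<in>F. cnj (c e) * cinner e w)"
      by (simp add: z cinner_sum_left cinner_scaleC_left)
    also have "\<dots> = 0"
      by (rule sum.neutral) (use F fy in \<open>auto simp: w_def cinner_diff_right\<close>)
    finally show "z \<in> {z. cinner z w = 0}" by simp
  qed
  moreover have "closed {z. cinner z w = 0}"
    by (intro closed_Collect_eq linear_continuous_on bounded_linear_cinner_left continuous_on_const)
  ultimately have "closure (cspan E) \<subseteq> {z. cinner z w = 0}"
    by (rule closure_minimal)
  then have "cinner w w = 0" using assms by (auto simp: is_onb_def)
  then have "w = 0" using cinner_eq_zero_iff by blast
  then have "x = y" by (simp add: w_def)
  with hy show ?thesis by simp
qed

lemma parseval:
  fixes x :: "'a::{complex_inner, complete_space}"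
  assumes "is_onb E"
  shows "((\<lambda>e. (cmod (cinner e x))\<^sup>2) has_sum (norm x)\<^sup>2) E"
proof -
  have "((\<lambda>e. cinner x (scaleC (cinner e x) e)) has_sum cinner x x) E"
    by (rule has_sum_bounded_linear[OF bounded_linear_cinner_right onb_expansion[OF assms]])
  then have "((\<lambda>e. Re (cinner x (scaleC (cinner e x) e))) has_sum Re (cinner x x)) E"
    by (rule has_sum_Re)
  moreover have "Re (cinner x (scaleC (cinner e x) e)) = (cmod (cinner e x))\<^sup>2" for e
  proof -
    have "cinner x (scaleC (cinner e x) e) = cinner e x * cnj (cinner e x)"
      by (simp add: cinner_scaleC_right cinner_conj_commute[of x e])
    also have "\<dots> = of_real ((cmod (cinner e x))\<^sup>2)"
      by (rule mult_cnj_self)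
    finally show ?thesis by simp
  qed
  moreover have "Re (cinner x x) = (norm x)\<^sup>2" by (simp add: cinner_self_real)
  ultimately show ?thesis by simp
qed



lemma adj_unique:
  assumes "\<And>x. cinner (T x) y = cinner x z"
  shows "adj T y = z"
  unfolding adj_def
proof (rule the_equality)
  show "\<forall>x. cinner (T x) y = cinner x z" using assms by blast
  fix z' assume "\<forall>x. cinner (T x) y = cinner x z'"
  then show "z' = z" using assms by (intro cinner_ext) metis
qed

lemma clinear_scaleC:
  assumes "bounded_clinear T" shows "T (scaleC a x) = scaleC a (T x)"
  using assms unfolding bounded_clinear_def clinear_def by blast

lemma adj_exists_hs:
  fixes T :: "'a::{complex_inner, complete_space} \<Rightarrow> 'a"
  assumes T: "bounded_clinear T" and E: "is_onb E"
    and hs: "(\<lambda>e. (norm (T e))\<^sup>2) summable_on E"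
  shows "cinner (T x) y = cinner x (adj T y)"
proof -
  have on: "corthonormal E" using E by (simp add: is_onb_def)
  define c where "c e = cinner (T e) y" for e
  have "(\<lambda>e. (norm y)\<^sup>2 * (norm (T e))\<^sup>2) summable_on E"
    by (rule summable_on_cmult_right[OF hs])
  then have cs: "(\<lambda>e. (cmod (c e))\<^sup>2) summable_on E"
  proof (rule summable_on_comparison_test)
    fix e
    have "cmod (c e) \<le> norm (T e) * norm y" unfolding c_def by (rule cauchy_schwarz)
    then have "(cmod (c e))\<^sup>2 \<le> (norm (T e) * norm y)\<^sup>2" by (rule power_mono) simp
    then show "(cmod (c e))\<^sup>2 \<le> (norm y)\<^sup>2 * (norm (T e))\<^sup>2" by (simp add: power_mult_distrib mult.commute)
  qed simp
  define z where "z = infsum (\<lambda>e. scaleC (c e) e) E"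
  have hz: "((\<lambda>e. scaleC (c e) e) has_sum z) E"
    using comb_summable[OF on cs] by (simp add: z_def)
  have xz: "((\<lambda>e. cinner x e * c e) has_sum cinner x z) E" for x
  proof -
    have "((\<lambda>e. cinner x (scaleC (c e) e)) has_sum cinner x z) E"
      by (rule has_sum_bounded_linear[OF bounded_linear_cinner_right hz])
    then show ?thesis by (simp add: cinner_scaleC_right mult.commute)
  qed
  have Txy: "((\<lambda>e. cinner x e * c e) has_sum cinner (T x) y) E" for x
  proof -
    have "((\<lambda>e. T (scaleC (cinner e x) e)) has_sum T x) E"
      by (rule has_sum_bounded_linear[OF bounded_clinear_bounded_linear[OF T] onb_expansion[OF E]])
    then have "((\<lambda>e. scaleC (cinner e x) (T e)) has_sum T x) E"
      by (simp add: clinear_scaleC[OF T])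
    then have "((\<lambda>e. cinner (scaleC (cinner e x) (T e)) y) has_sum cinner (T x) y) E"
      by (rule has_sum_bounded_linear[OF bounded_linear_cinner_left])
    then show ?thesis
      by (simp add: cinner_scaleC_left c_def cinner_conj_commute[of e x for e])
  qed
  have "cinner (T x) y = cinner x z" for x
    using Txy[of x] xz[of x] by (rule has_sum_unique)
  then have "adj T y = z" by (rule adj_unique)
  then show ?thesis using \<open>cinner (T x) y = cinner x z\<close> by simp
qed

lemma summable_infsum_finite_sum:
  fixes g :: "'i \<Rightarrow> 'b \<Rightarrow> real"
  assumes "finite F" "\<And>i. i \<in> F \<Longrightarrow> g i summable_on S"
  shows "(\<lambda>x. \<Sum>i\<in>F. g i x) summable_on S \<and> infsum (\<lambda>x. \<Sum>i\<in>F. g i x) S = (\<Sum>i\<in>F. infsum (g i) S)"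
  using assms
proof (induction F rule: finite_induct)
  case empty then show ?case by simp
next
  case (insert a F)
  then have ga: "g a summable_on S" and IH: "(\<lambda>x. \<Sum>i\<in>F. g i x) summable_on S"
    "infsum (\<lambda>x. \<Sum>i\<in>F. g i x) S = (\<Sum>i\<in>F. infsum (g i) S)" by auto
  have "(\<lambda>x. g a x + (\<Sum>i\<in>F. g i x)) summable_on S"
    by (rule summable_on_add[OF ga IH(1)])
  moreover have "infsum (\<lambda>x. g a x + (\<Sum>i\<in>F. g i x)) S = infsum (g a) S + (\<Sum>i\<in>F. infsum (g i) S)"
    using infsum_add[OF ga IH(1)] IH(2) by simp
  ultimately show ?case using insert.hyps by simp
qed

lemma hs_swap:
  fixes A B :: "'a::{complex_inner, complete_space} \<Rightarrow> 'a"
  assumes on1: "corthonormal E1" and E2: "is_onb E2"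
    and adj: "\<And>x y. cinner (A x) y = cinner x (B y)"
    and sB: "(\<lambda>f. (norm (B f))\<^sup>2) summable_on E2"
  shows "(\<lambda>e. (norm (A e))\<^sup>2) summable_on E1"
    and "infsum (\<lambda>e. (norm (A e))\<^sup>2) E1 \<le> infsum (\<lambda>f. (norm (B f))\<^sup>2) E2"
proof -
  have on2: "corthonormal E2" using E2 by (simp add: is_onb_def)
  have key: "(\<Sum>e\<in>F. (norm (A e))\<^sup>2) \<le> infsum (\<lambda>f. (norm (B f))\<^sup>2) E2"
    if F: "finite F" "F \<subseteq> E1" for F
  proof -
    have gs: "(\<lambda>f. (cmod (cinner f (A e)))\<^sup>2) summable_on E2" for e
      by (rule bessel_summable(1)[OF on2])
    have ge: "infsum (\<lambda>f. (cmod (cinner f (A e)))\<^sup>2) E2 = (norm (A e))\<^sup>2" for e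
      using parseval[OF E2, of "A e"] by (simp add: infsumI)
    have sw: "(cmod (cinner f (A e))) = cmod (cinner e (B f))" for e f
      by (metis adj cinner_conj_commute complex_mod_cnj)
    have "(\<Sum>e\<in>F. (norm (A e))\<^sup>2) = (\<Sum>e\<in>F. infsum (\<lambda>f. (cmod (cinner f (A e)))\<^sup>2) E2)"
      by (simp add: ge)
    also have "\<dots> = infsum (\<lambda>f. \<Sum>e\<in>F. (cmod (cinner f (A e)))\<^sup>2) E2"
      using summable_infsum_finite_sum[of F "\<lambda>e f. (cmod (cinner f (A e)))\<^sup>2" E2] F gs by simp
    also have "\<dots> \<le> infsum (\<lambda>f. (norm (B f))\<^sup>2) E2"
    proof (rule infsum_mono)
      show "(\<lambda>f. \<Sum>e\<in>F. (cmod (cinner f (A e)))\<^sup>2) summable_on E2"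
        using summable_infsum_finite_sum[of F "\<lambda>e f. (cmod (cinner f (A e)))\<^sup>2" E2] F gs by simp
      show "(\<lambda>f. (norm (B f))\<^sup>2) summable_on E2" by (rule sB)
      fix f
      show "(\<Sum>e\<in>F. (cmod (cinner f (A e)))\<^sup>2) \<le> (norm (B f))\<^sup>2"
        unfolding sw by (rule bessel_finite[OF on1 F])
    qed
    finally show ?thesis .
  qed
  show s: "(\<lambda>e. (norm (A e))\<^sup>2) summable_on E1"
    apply (rule nonneg_bdd_above_summable_on)
     apply simp
    apply (rule bdd_aboveI[where M="infsum (\<lambda>f. (norm (B f))\<^sup>2) E2"])
    using key by auto
  show "infsum (\<lambda>e. (norm (A e))\<^sup>2) E1 \<le> infsum (\<lambda>f. (norm (B f))\<^sup>2) E2"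
    by (rule infsum_le_finite_sums[OF s]) (use key in auto)
qed



lemma theta_bound:
  fixes T T' :: "'a::{complex_inner, complete_space} \<Rightarrow> 'a"
  assumes clin: "\<And>a x. T (scaleC a x) = scaleC a (T x)"
    and adjT: "\<And>x y. cinner (T x) y = cinner x (T' y)"
    and E0def: "E0 = (SOME E. is_onb E)"
    and ha: "((\<lambda>e. (norm (T e))\<^sup>2) has_sum a0) E0"
    and hb: "((\<lambda>e. (norm (T' e))\<^sup>2) has_sum b0) E0"
    and hc: "((\<lambda>e. cinner e (T (T e))) has_sum C) E0"
    and ba: "b0 \<le> a0"
  shows "0 \<le> hs_norm (real_part_op (\<lambda>x. scaleC (cis \<theta>) (T x)))
       \<and> hs_norm (real_part_op (\<lambda>x. scaleC (cis \<theta>) (T x))) \<le> sqrt (a0/2 + cmod C/2)"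
proof -
  have tr: "trace X = infsum (\<lambda>e. cinner e (X e)) E0" for X
    unfolding trace_def E0def ..
  define A where "A x = scaleC (cis \<theta>) (T x)" for x
  define A' where "A' y = scaleC (cnj (cis \<theta>)) (T' y)" for y
  have AA': "cinner (A x) y = cinner x (A' y)" for x y
    by (simp add: A_def A'_def cinner_scaleC_left cinner_scaleC_right adjT)
  have A'A: "cinner (A' x) y = cinner x (A y)" for x y
    by (metis AA' cinner_conj_commute)
  have adjA: "adj A = A'"
    by (rule ext, rule adj_unique, rule AA')
  define S where "S x = scaleC (1/2) (A x + A' x)" for x
  have Sdef: "real_part_op (\<lambda>x. scaleC (cis \<theta>) (T x)) = S"
    unfolding real_part_op_def S_def[abs_def] adjA[symmetric] A_def[abs_def] ..
  have Ssa: "cinner (S x) y = cinner x (S y)" for x y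
    by (simp add: S_def cinner_scaleC_left cinner_scaleC_right cinner_add_left cinner_add_right AA' A'A)
  have adjS: "adj S = S"
    by (rule ext, rule adj_unique, rule Ssa)
  have T'T: "cinner (T' e) (T e) = cinner e (T (T e))" for e
    by (metis adjT cinner_conj_commute)
  define s where "s e = (1/4) * ((norm (T e))\<^sup>2 + (norm (T' e))\<^sup>2 + 2 * Re (cis (2*\<theta>) * cinner e (T (T e))))" for e
  have SS: "cinner (S e) (S e) = of_real (s e)" for e
  proof -
    define u where "u = A e"
    define v where "v = A' e"
    have cc: "cnj (cis \<theta>) * cis \<theta> = 1"
      by (simp add: cis_cnj cis_mult)
    have uu: "cinner u u = of_real ((norm (T e))\<^sup>2)"
      by (simp add: u_def A_def cinner_self_real norm_scaleC)
    have vv: "cinner v v = of_real ((norm (T' e))\<^sup>2)"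
      by (simp add: v_def A'_def cinner_self_real norm_scaleC)
    define z where "z = cis (2*\<theta>) * cinner e (T (T e))"
    have vu: "cinner v u = z"
    proof -
      have "cinner v u = cis \<theta> * cis \<theta> * cinner (T' e) (T e)"
        by (simp add: v_def u_def A'_def A_def cinner_scaleC_left cinner_scaleC_right mult.assoc)
      also have "cis \<theta> * cis \<theta> = cis (2*\<theta>)" by (metis cis_mult mult_2)
      finally show ?thesis by (simp add: z_def T'T)
    qed
    have uv: "cinner u v = cnj z" by (metis vu cinner_conj_commute)
    have "cinner (S e) (S e) = (1/4) * (cinner u u + cinner v v + (cinner v u + cinner u v))"
      by (simp add: S_def u_def v_def cinner_scaleC_left cinner_scaleC_right cinner_add_left cinner_add_right algebra_simps)
    also have "\<dots> = (1/4) * (of_real ((norm (T e))\<^sup>2) + of_real ((norm (T' e))\<^sup>2) + of_real (2 * Re z))"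
      unfolding uu vv vu uv complex_add_cnj ..
    also have "\<dots> = of_real (s e)" by (simp add: s_def z_def)
    finally show ?thesis .
  qed
  have s_nn: "s e \<ge> 0" for e
    using cinner_ge_zero[of "S e"] SS[of e] by simp
  define s0 where "s0 = (1/4) * (a0 + b0 + 2 * Re (cis (2*\<theta>) * C))"
  have hs: "(s has_sum s0) E0"
  proof -
    have "((\<lambda>e. cis (2*\<theta>) * cinner e (T (T e))) has_sum cis (2*\<theta>) * C) E0"
      by (rule has_sum_cmult_right[OF hc])
    then have "((\<lambda>e. Re (cis (2*\<theta>) * cinner e (T (T e)))) has_sum Re (cis (2*\<theta>) * C)) E0"
      by (rule has_sum_Re)
    then have "((\<lambda>e. 2 * Re (cis (2*\<theta>) * cinner e (T (T e)))) has_sum 2 * Re (cis (2*\<theta>) * C)) E0"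
      by (rule has_sum_cmult_right)
    then have "((\<lambda>e. (norm (T e))\<^sup>2 + (norm (T' e))\<^sup>2 + 2 * Re (cis (2*\<theta>) * cinner e (T (T e)))) has_sum a0 + b0 + 2 * Re (cis (2*\<theta>) * C)) E0"
      by (intro has_sum_add ha hb)
    then show ?thesis unfolding s_def[abs_def] s0_def
      by (rule has_sum_cmult_right)
  qed
  have "trace (adj S \<circ> S) = infsum (\<lambda>e. cinner (S e) (S e)) E0"
    unfolding tr adjS by (simp add: Ssa)
  also have "\<dots> = infsum (\<lambda>e. of_real (s e)) E0" by (simp add: SS)
  also have "\<dots> = of_real s0"
    by (rule infsumI, rule has_sum_bounded_linear[OF bounded_linear_of_real hs])
  finally have trS: "trace (adj S \<circ> S) = of_real s0" .
  have hsS: "hs_norm S = sqrt s0" unfolding hs_norm_def trS by simp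
  have s0nn: "0 \<le> s0" using has_sum_nonneg[OF hs] s_nn by auto
  have "Re (cis (2*\<theta>) * C) \<le> cmod (cis (2*\<theta>) * C)" by (rule complex_Re_le_cmod)
  also have "\<dots> = cmod C" by (simp add: norm_mult)
  finally have R: "Re (cis (2*\<theta>) * C) \<le> cmod C" .
  have "\<And>a b r m::real. r \<le> m \<Longrightarrow> b \<le> a \<Longrightarrow> 1/4*(a+b+2*r) \<le> a/2 + m/2"
    by (simp add: field_simps)
  from this[OF R ba] have "s0 \<le> a0/2 + cmod C/2" unfolding s0_def .
  then have "sqrt s0 \<le> sqrt (a0/2 + cmod C/2)" by (rule real_sqrt_le_mono)
  then show ?thesis unfolding Sdef hsS using s0nn by simp
qed



theorem corollary3p5:
  fixes T :: "'a::{complex_inner, complete_space} \<Rightarrow> 'a"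
  assumes "bounded_clinear T"
    and "hilbert_schmidt T"
  shows "(w2 T)\<^sup>2 \<le> 1/2 * (hs_norm T)\<^sup>2 + 1/2 * cmod (trace (T \<circ> T))"
proof -
  obtain E where E: "is_onb E" and hsE: "(\<lambda>e. (norm (T e))\<^sup>2) summable_on E"
    using assms(2) unfolding hilbert_schmidt_def by blast
  define E0 :: "'a set" where "E0 = (SOME E. is_onb E)"
  have E0: "is_onb E0" unfolding E0_def using E by (rule someI[of is_onb])
  have onE: "corthonormal E" and on0: "corthonormal E0"
    using E E0 by (auto simp: is_onb_def)
  have tr: "trace X = infsum (\<lambda>e. cinner e (X e)) E0" for X
    unfolding trace_def E0_def ..
  define T' where "T' = adj T"
  have adjT: "cinner (T x) y = cinner x (T' y)" for x y
    unfolding T'_def by (rule adj_exists_hs[OF assms(1) E hsE])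
  have adjT': "cinner (T' x) y = cinner x (T y)" for x y
    by (metis adjT cinner_conj_commute)
  have clin: "T (scaleC a x) = scaleC a (T x)" for a x
    by (rule clinear_scaleC[OF assms(1)])
  have bE: "(\<lambda>e. (norm (T' e))\<^sup>2) summable_on E"
    by (rule hs_swap(1)[OF onE E adjT' hsE])
  have aE0: "(\<lambda>e. (norm (T e))\<^sup>2) summable_on E0"
    by (rule hs_swap(1)[OF on0 E adjT bE])
  have bE0: "(\<lambda>e. (norm (T' e))\<^sup>2) summable_on E0"
    by (rule hs_swap(1)[OF on0 E0 adjT' aE0])
  define a0 where "a0 = infsum (\<lambda>e. (norm (T e))\<^sup>2) E0"
  define b0 where "b0 = infsum (\<lambda>e. (norm (T' e))\<^sup>2) E0"
  have ba: "b0 \<le> a0"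
    unfolding a0_def b0_def by (rule hs_swap(2)[OF on0 E0 adjT' aE0])
  have ha: "((\<lambda>e. (norm (T e))\<^sup>2) has_sum a0) E0" using aE0 by (simp add: a0_def)
  have hb: "((\<lambda>e. (norm (T' e))\<^sup>2) has_sum b0) E0" using bE0 by (simp add: b0_def)
  have cb: "norm (cinner e (T (T e))) \<le> ((norm (T' e))\<^sup>2 + (norm (T e))\<^sup>2) / 2" for e
    using cmod_cinner_le_amgm[of "T' e" "T e"] adjT'[of e "T e"] by simp
  have "(\<lambda>e. ((norm (T' e))\<^sup>2 + (norm (T e))\<^sup>2) / 2) summable_on E0"
    using summable_on_cmult_left[OF summable_on_add[OF bE0 aE0], of "1/2"] by (simp add: field_simps)
  then have "(\<lambda>e. norm (cinner e (T (T e)))) summable_on E0"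
    by (rule summable_on_comparison_test) (use cb in auto)
  then have "(\<lambda>e. cinner e (T (T e))) summable_on E0"
    by (rule abs_summable_summable)
  then have hc: "((\<lambda>e. cinner e (T (T e))) has_sum trace (T \<circ> T)) E0"
    by (simp add: tr)
  have trT: "trace (adj T \<circ> T) = of_real a0"
  proof -
    have "trace (adj T \<circ> T) = infsum (\<lambda>e. of_real ((norm (T e))\<^sup>2)) E0"
      unfolding tr T'_def[symmetric] by (simp add: adjT[symmetric] cinner_self_real)
    also have "\<dots> = of_real a0"
      by (rule infsumI, rule has_sum_bounded_linear[OF bounded_linear_of_real ha])
    finally show ?thesis .
  qed
  have a0nn: "0 \<le> a0" using has_sum_nonneg[OF ha] by simp
  have hsT: "(hs_norm T)\<^sup>2 = a0"
    unfolding hs_norm_def trT using a0nn by simp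
  define B where "B = a0/2 + cmod (trace (T \<circ> T))/2"
  have th: "0 \<le> hs_norm (real_part_op (\<lambda>x. scaleC (cis \<theta>) (T x)))
       \<and> hs_norm (real_part_op (\<lambda>x. scaleC (cis \<theta>) (T x))) \<le> sqrt B" for \<theta>
    unfolding B_def by (rule theta_bound[OF clin adjT E0_def ha hb hc ba])
  have w2def: "w2 T = (SUP \<theta>. hs_norm (real_part_op (\<lambda>x. scaleC (cis \<theta>) (T x))))"
    unfolding w2_def ..
  have bdd: "bdd_above (range (\<lambda>\<theta>. hs_norm (real_part_op (\<lambda>x. scaleC (cis \<theta>) (T x)))))"
    using th by (auto intro!: bdd_aboveI)
  have w2le: "w2 T \<le> sqrt B"
    unfolding w2def by (rule cSUP_least) (use th in auto)
  have w2ge: "0 \<le> w2 T"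
  proof -
    have "0 \<le> hs_norm (real_part_op (\<lambda>x. scaleC (cis 0) (T x)))" using th by blast
    also have "\<dots> \<le> w2 T" unfolding w2def by (rule cSUP_upper[OF UNIV_I bdd])
    finally show ?thesis .
  qed
  have Bnn: "0 \<le> B" unfolding B_def using a0nn by simp
  have "(w2 T)\<^sup>2 \<le> (sqrt B)\<^sup>2" by (rule power_mono[OF w2le w2ge])
  also have "\<dots> = B" using Bnn by simp
  also have "\<dots> = 1/2 * (hs_norm T)\<^sup>2 + 1/2 * cmod (trace (T \<circ> T))"
    unfolding B_def hsT by simp
  finally show ?thesis .
qed

end
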